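(* Let $M$ be an intrinsically projective right $R$-module and let $A,B\le M$ be finitely $M$-presented submodules. Then $A+B$ is finitely $M$-presented if and only if $A\cap B$ is finitely $M$-generated.
   Context: $M^{(n)}$ denotes the direct sum of $n$ copies of $M$. A module $N$ is finitely $M$-generated if there is an epimorphism $M^{(n)}\to N$ for some $n>0$. $N$ is finitely $M$-presented if there is an exact sequence $M^{(\ell)}\to M^{(n)}\to N\to 0$ for some integers $n,\ell>0$. $M$ is intrinsically projective if for every integer $n>0$, every submodule $N\le M$, every epimorphism $\alpha:M^{(n)}\to N$ and every homomorphism $\beta:M\to N$, there exists $\gamma:M\to M^{(n)}$ with $\alpha\gamma=\beta$. *)

theory Defs
  imports "HOL-Algebra.Ring"
begin

text \<open>HOL-Algebra's module locale requires a commutative ring, so we define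
  right modules directly.\<close>

record ('m, 'r) rmod =
  mcar  :: "'m set"
  madd  :: "'m \<Rightarrow> 'm \<Rightarrow> 'm"
  mzero :: "'m"
  mact  :: "'m \<Rightarrow> 'r \<Rightarrow> 'm"

definition right_module :: "('r, 'a) ring_scheme \<Rightarrow> ('m, 'r, 'b) rmod_scheme \<Rightarrow> bool" where
  "right_module R M \<longleftrightarrow> ring R \<and>
     mzero M \<in> mcar M \<and>
     (\<forall>x\<in>mcar M. \<forall>y\<in>mcar M. madd M x y \<in> mcar M) \<and>
     (\<forall>x\<in>mcar M. \<forall>y\<in>mcar M. \<forall>z\<in>mcar M. madd M (madd M x y) z = madd M x (madd M y z)) \<and>
     (\<forall>x\<in>mcar M. \<forall>y\<in>mcar M. madd M x y = madd M y x) \<and>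
     (\<forall>x\<in>mcar M. madd M (mzero M) x = x) \<and>
     (\<forall>x\<in>mcar M. \<exists>y\<in>mcar M. madd M x y = mzero M) \<and>
     (\<forall>x\<in>mcar M. \<forall>r\<in>carrier R. mact M x r \<in> mcar M) \<and>
     (\<forall>x\<in>mcar M. \<forall>y\<in>mcar M. \<forall>r\<in>carrier R.
        mact M (madd M x y) r = madd M (mact M x r) (mact M y r)) \<and>
     (\<forall>x\<in>mcar M. \<forall>r\<in>carrier R. \<forall>s\<in>carrier R.
        mact M x (r \<oplus>\<^bsub>R\<^esub> s) = madd M (mact M x r) (mact M x s)) \<and>
     (\<forall>x\<in>mcar M. \<forall>r\<in>carrier R. \<forall>s\<in>carrier R.
        mact M x (r \<otimes>\<^bsub>R\<^esub> s) = mact M (mact M x r) s) \<and>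
     (\<forall>x\<in>mcar M. mact M x \<one>\<^bsub>R\<^esub> = x)"

definition submodule :: "('r, 'a) ring_scheme \<Rightarrow> ('m, 'r, 'b) rmod_scheme \<Rightarrow> 'm set \<Rightarrow> bool" where
  "submodule R M N \<longleftrightarrow> N \<subseteq> mcar M \<and> mzero M \<in> N \<and>
     (\<forall>x\<in>N. \<forall>y\<in>N. madd M x y \<in> N) \<and>
     (\<forall>x\<in>N. \<exists>y\<in>N. madd M x y = mzero M) \<and>
     (\<forall>x\<in>N. \<forall>r\<in>carrier R. mact M x r \<in> N)"

definition submod :: "('m, 'r, 'b) rmod_scheme \<Rightarrow> 'm set \<Rightarrow> ('m, 'r, 'b) rmod_scheme" where
  "submod M N = M\<lparr>mcar := N\<rparr>"

definition msum :: "('m, 'r, 'b) rmod_scheme \<Rightarrow> 'm set \<Rightarrow> 'm set \<Rightarrow> 'm set" where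
  "msum M A B = {madd M a b | a b. a \<in> A \<and> b \<in> B}"

definition dsum :: "('m, 'r, 'b) rmod_scheme \<Rightarrow> nat \<Rightarrow> (nat \<Rightarrow> 'm, 'r) rmod" where
  "dsum M n = \<lparr> mcar = {f. (\<forall>i<n. f i \<in> mcar M) \<and> (\<forall>i\<ge>n. f i = mzero M)},
                madd = (\<lambda>f g i. if i < n then madd M (f i) (g i) else mzero M),
                mzero = (\<lambda>i. mzero M),
                mact = (\<lambda>f r i. if i < n then mact M (f i) r else mzero M) \<rparr>"

definition rhom :: "('r, 'a) ring_scheme \<Rightarrow> ('m, 'r, 'b) rmod_scheme \<Rightarrow> ('n, 'r, 'c) rmod_scheme
                     \<Rightarrow> ('m \<Rightarrow> 'n) \<Rightarrow> bool" where
  "rhom R M N f \<longleftrightarrow> (\<forall>x\<in>mcar M. f x \<in> mcar N) \<and>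
     (\<forall>x\<in>mcar M. \<forall>y\<in>mcar M. f (madd M x y) = madd N (f x) (f y)) \<and>
     (\<forall>x\<in>mcar M. \<forall>r\<in>carrier R. f (mact M x r) = mact N (f x) r)"

definition repi :: "('r, 'a) ring_scheme \<Rightarrow> ('m, 'r, 'b) rmod_scheme \<Rightarrow> ('n, 'r, 'c) rmod_scheme
                     \<Rightarrow> ('m \<Rightarrow> 'n) \<Rightarrow> bool" where
  "repi R M N f \<longleftrightarrow> rhom R M N f \<and> f ` mcar M = mcar N"

definition fin_M_generated :: "('r, 'a) ring_scheme \<Rightarrow> ('m, 'r, 'b) rmod_scheme
                     \<Rightarrow> ('n, 'r, 'c) rmod_scheme \<Rightarrow> bool" where
  "fin_M_generated R M N \<longleftrightarrow> (\<exists>n>0. \<exists>\<alpha>. repi R (dsum M n) N \<alpha>)"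

definition fin_M_presented :: "('r, 'a) ring_scheme \<Rightarrow> ('m, 'r, 'b) rmod_scheme
                     \<Rightarrow> ('n, 'r, 'c) rmod_scheme \<Rightarrow> bool" where
  "fin_M_presented R M N \<longleftrightarrow> (\<exists>n>0. \<exists>l>0. \<exists>\<alpha> \<beta>.
      rhom R (dsum M l) (dsum M n) \<beta> \<and> repi R (dsum M n) N \<alpha> \<and>
      \<beta> ` mcar (dsum M l) = {x \<in> mcar (dsum M n). \<alpha> x = mzero N})"

definition intrinsically_projective :: "('r, 'a) ring_scheme \<Rightarrow> ('m, 'r, 'b) rmod_scheme \<Rightarrow> bool" where
  "intrinsically_projective R M \<longleftrightarrow>
     (\<forall>n>0. \<forall>N. submodule R M N \<longrightarrow>
        (\<forall>\<alpha> \<beta>. repi R (dsum M n) (submod M N) \<alpha> \<longrightarrow> rhom R M (submod M N) \<beta> \<longrightarrow>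
           (\<exists>\<gamma>. rhom R M (dsum M n) \<gamma> \<and> (\<forall>x\<in>mcar M. \<alpha> (\<gamma> x) = \<beta> x))))"

end

theory Submission
  imports Defs
begin

definition mneg :: "('m, 'r, 'b) rmod_scheme \<Rightarrow> 'm \<Rightarrow> 'm" where
  "mneg M x = (SOME y. y \<in> mcar M \<and> madd M x y = mzero M)"

fun sumk :: "('m, 'r, 'b) rmod_scheme \<Rightarrow> nat \<Rightarrow> (nat \<Rightarrow> 'm) \<Rightarrow> 'm" where
  "sumk M 0 f = mzero M"
| "sumk M (Suc k) f = madd M (sumk M k f) (f k)"

locale rm =
  fixes R :: "('r, 'a) ring_scheme" and M :: "('m, 'r, 'b) rmod_scheme"
  assumes md: "right_module R M"
begin

lemma z_c[simp]: "mzero M \<in> mcar M" using md unfolding right_module_def by blast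
lemma add_c[simp]: "x \<in> mcar M \<Longrightarrow> y \<in> mcar M \<Longrightarrow> madd M x y \<in> mcar M"
  using md unfolding right_module_def by metis
lemma assoc: "x \<in> mcar M \<Longrightarrow> y \<in> mcar M \<Longrightarrow> z \<in> mcar M \<Longrightarrow> madd M (madd M x y) z = madd M x (madd M y z)"
  using md unfolding right_module_def by blast
lemma comm: "x \<in> mcar M \<Longrightarrow> y \<in> mcar M \<Longrightarrow> madd M x y = madd M y x"
  using md unfolding right_module_def by blast
lemma lz[simp]: "x \<in> mcar M \<Longrightarrow> madd M (mzero M) x = x"
  using md unfolding right_module_def by blast
lemma rz[simp]: "x \<in> mcar M \<Longrightarrow> madd M x (mzero M) = x"
  using lz comm z_c by metis
lemma ex_neg: "x \<in> mcar M \<Longrightarrow> \<exists>y\<in>mcar M. madd M x y = mzero M"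
  using md unfolding right_module_def by blast
lemma neg_c[simp]: "x \<in> mcar M \<Longrightarrow> mneg M x \<in> mcar M"
  unfolding mneg_def using ex_neg by (metis (mono_tags, lifting) someI)
lemma neg_r[simp]: "x \<in> mcar M \<Longrightarrow> madd M x (mneg M x) = mzero M"
  unfolding mneg_def using ex_neg by (metis (mono_tags, lifting) someI)
lemma neg_l[simp]: "x \<in> mcar M \<Longrightarrow> madd M (mneg M x) x = mzero M"
  using neg_r comm neg_c by metis
lemma act_c[simp]: "x \<in> mcar M \<Longrightarrow> r \<in> carrier R \<Longrightarrow> mact M x r \<in> mcar M"
  using md unfolding right_module_def by blast
lemma act_add: "x \<in> mcar M \<Longrightarrow> y \<in> mcar M \<Longrightarrow> r \<in> carrier R \<Longrightarrow>
   mact M (madd M x y) r = madd M (mact M x r) (mact M y r)"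
  using md unfolding right_module_def by blast
lemma act_radd: "x \<in> mcar M \<Longrightarrow> r \<in> carrier R \<Longrightarrow> s \<in> carrier R \<Longrightarrow>
   mact M x (r \<oplus>\<^bsub>R\<^esub> s) = madd M (mact M x r) (mact M x s)"
  using md unfolding right_module_def by blast
lemma act_mult: "x \<in> mcar M \<Longrightarrow> r \<in> carrier R \<Longrightarrow> s \<in> carrier R \<Longrightarrow>
   mact M x (r \<otimes>\<^bsub>R\<^esub> s) = mact M (mact M x r) s"
  using md unfolding right_module_def by blast
lemma act_one: "x \<in> mcar M \<Longrightarrow> mact M x \<one>\<^bsub>R\<^esub> = x"
  using md unfolding right_module_def by blast

lemma cancel:
  assumes "x \<in> mcar M" "y \<in> mcar M" "z \<in> mcar M" "madd M x y = madd M x z"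
  shows "y = z"
proof -
  have "y = madd M (madd M (mneg M x) x) y" using assms by simp
  also have "\<dots> = madd M (mneg M x) (madd M x y)" using assms(1,2) assoc[of "mneg M x" x y] by simp
  also have "\<dots> = madd M (mneg M x) (madd M x z)" using assms(4) by simp
  also have "\<dots> = madd M (madd M (mneg M x) x) z" using assms(1,3) assoc[of "mneg M x" x z] by simp
  also have "\<dots> = z" using assms by simp
  finally show ?thesis .
qed

lemma act_zero[simp]: "r \<in> carrier R \<Longrightarrow> mact M (mzero M) r = mzero M"
proof -
  assume r: "r \<in> carrier R"
  have "madd M (mact M (mzero M) r) (mact M (mzero M) r) = mact M (mzero M) r"
    using act_add[of "mzero M" "mzero M" r] r by simp
  also have "\<dots> = madd M (mact M (mzero M) r) (mzero M)" using r by simp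
  finally show ?thesis using cancel r by (meson act_c z_c)
qed

lemma neg_unique:
  assumes "x \<in> mcar M" "y \<in> mcar M" "madd M x y = mzero M"
  shows "mneg M x = y"
  using cancel[of x "mneg M x" y] assms by simp

lemma swap4:
  assumes "a \<in> mcar M" "b \<in> mcar M" "c \<in> mcar M" "d \<in> mcar M"
  shows "madd M (madd M a b) (madd M c d) = madd M (madd M a c) (madd M b d)"
proof -
  have "madd M (madd M a b) (madd M c d) = madd M a (madd M b (madd M c d))" using assms assoc by simp
  also have "madd M b (madd M c d) = madd M c (madd M b d)"
    using assms assoc comm by (metis)
  finally show ?thesis using assms assoc by simp
qed

lemma neg_add: "x \<in> mcar M \<Longrightarrow> y \<in> mcar M \<Longrightarrow> mneg M (madd M x y) = madd M (mneg M x) (mneg M y)"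
  by (rule neg_unique) (simp_all add: swap4[of x y "mneg M x" "mneg M y"])

lemma act_neg: "x \<in> mcar M \<Longrightarrow> r \<in> carrier R \<Longrightarrow> mneg M (mact M x r) = mact M (mneg M x) r"
  by (rule neg_unique) (simp_all add: act_add[symmetric])

lemma add_neg_cancel1[simp]: "x \<in> mcar M \<Longrightarrow> y \<in> mcar M \<Longrightarrow> madd M (madd M x (mneg M y)) y = x"
  by (simp add: assoc)
lemma add_neg_cancel2[simp]: "x \<in> mcar M \<Longrightarrow> y \<in> mcar M \<Longrightarrow> madd M (madd M x y) (mneg M y) = x"
  by (simp add: assoc)

lemma sumk_c[simp]: "(\<And>i. i < k \<Longrightarrow> f i \<in> mcar M) \<Longrightarrow> sumk M k f \<in> mcar M"
  by (induction k) auto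

lemma sumk_add: "(\<And>i. i < k \<Longrightarrow> f i \<in> mcar M) \<Longrightarrow> (\<And>i. i < k \<Longrightarrow> g i \<in> mcar M) \<Longrightarrow>
   sumk M k (\<lambda>i. madd M (f i) (g i)) = madd M (sumk M k f) (sumk M k g)"
  by (induction k) (auto simp: swap4)

lemma sumk_act: "(\<And>i. i < k \<Longrightarrow> f i \<in> mcar M) \<Longrightarrow> r \<in> carrier R \<Longrightarrow>
   sumk M k (\<lambda>i. mact M (f i) r) = mact M (sumk M k f) r"
  by (induction k) (auto simp: act_add)

lemma sumk_single: "v \<in> mcar M \<Longrightarrow> sumk M k (\<lambda>i. if j = i then v else mzero M) = (if j < k then v else mzero M)"
  by (induction k) auto

end

lemma sumk_cong: "(\<And>i. i < k \<Longrightarrow> f i = g i) \<Longrightarrow> sumk M k f = sumk M k g"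
  by (induction k) auto

lemma sumk_dsum: "sumk (dsum M n) k f j = (if j < n then sumk M k (\<lambda>i. f i j) else mzero M)"
  by (induction k) (auto simp: dsum_def)

lemma rhom_c: "rhom R X Y f \<Longrightarrow> x \<in> mcar X \<Longrightarrow> f x \<in> mcar Y"
  unfolding rhom_def by blast
lemma rhom_add: "rhom R X Y f \<Longrightarrow> x \<in> mcar X \<Longrightarrow> y \<in> mcar X \<Longrightarrow> f (madd X x y) = madd Y (f x) (f y)"
  unfolding rhom_def by blast
lemma rhom_act: "rhom R X Y f \<Longrightarrow> x \<in> mcar X \<Longrightarrow> r \<in> carrier R \<Longrightarrow> f (mact X x r) = mact Y (f x) r"
  unfolding rhom_def by blast

lemma hom_zero:
  assumes "rm R X" "rm R Y" "rhom R X Y f"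
  shows "f (mzero X) = mzero Y"
proof -
  interpret X: rm R X by fact
  interpret Y: rm R Y by fact
  have c: "f (mzero X) \<in> mcar Y" using rhom_c[OF assms(3) X.z_c] .
  have "f (madd X (mzero X) (mzero X)) = madd Y (f (mzero X)) (f (mzero X))"
    using rhom_add[OF assms(3) X.z_c X.z_c] .
  then have "madd Y (f (mzero X)) (f (mzero X)) = madd Y (f (mzero X)) (mzero Y)"
    using c by simp
  then show ?thesis using Y.cancel[OF c c Y.z_c] by simp
qed

lemma hom_neg:
  assumes "rm R X" "rm R Y" "rhom R X Y f" "x \<in> mcar X"
  shows "f (mneg X x) = mneg Y (f x)"
proof -
  interpret X: rm R X by fact
  interpret Y: rm R Y by fact
  have "madd Y (f x) (f (mneg X x)) = f (madd X x (mneg X x))"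
    using rhom_add[OF assms(3) assms(4) X.neg_c[OF assms(4)]] by simp
  also have "\<dots> = mzero Y" using hom_zero[OF assms(1-3)] assms(4) by simp
  finally show ?thesis using Y.neg_unique rhom_c[OF assms(3)] assms(4) X.neg_c by metis
qed

lemma hom_comp: "rhom R X Y f \<Longrightarrow> rhom R Y Z g \<Longrightarrow> rhom R X Z (\<lambda>x. g (f x))"
  unfolding rhom_def by auto

lemma hom_add:
  assumes "rm R Y" "rhom R X Y f" "rhom R X Y g"
  shows "rhom R X Y (\<lambda>x. madd Y (f x) (g x))"
proof -
  interpret rm R Y by fact
  show ?thesis unfolding rhom_def
  proof (intro conjI ballI)
    fix x assume x: "x \<in> mcar X"
    show "madd Y (f x) (g x) \<in> mcar Y" using rhom_c[OF assms(2) x] rhom_c[OF assms(3) x] by simp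
  next
    fix x y assume x: "x \<in> mcar X" and y: "y \<in> mcar X"
    show "madd Y (f (madd X x y)) (g (madd X x y)) = madd Y (madd Y (f x) (g x)) (madd Y (f y) (g y))"
      unfolding rhom_add[OF assms(2) x y] rhom_add[OF assms(3) x y]
      by (rule swap4[OF rhom_c[OF assms(2) x] rhom_c[OF assms(2) y] rhom_c[OF assms(3) x] rhom_c[OF assms(3) y]])
  next
    fix x r assume x: "x \<in> mcar X" and r: "r \<in> carrier R"
    show "madd Y (f (mact X x r)) (g (mact X x r)) = mact Y (madd Y (f x) (g x)) r"
      unfolding rhom_act[OF assms(2) x r] rhom_act[OF assms(3) x r]
      using act_add[OF rhom_c[OF assms(2) x] rhom_c[OF assms(3) x] r] by simp
  qed
qed

lemma hom_negf:
  assumes "rm R Y" "rhom R X Y f"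
  shows "rhom R X Y (\<lambda>x. mneg Y (f x))"
proof -
  interpret rm R Y by fact
  show ?thesis unfolding rhom_def
  proof (intro conjI ballI)
    fix x assume x: "x \<in> mcar X"
    show "mneg Y (f x) \<in> mcar Y" using rhom_c[OF assms(2) x] by simp
  next
    fix x y assume x: "x \<in> mcar X" and y: "y \<in> mcar X"
    show "mneg Y (f (madd X x y)) = madd Y (mneg Y (f x)) (mneg Y (f y))"
      unfolding rhom_add[OF assms(2) x y] by (rule neg_add[OF rhom_c[OF assms(2) x] rhom_c[OF assms(2) y]])
  next
    fix x r assume x: "x \<in> mcar X" and r: "r \<in> carrier R"
    show "mneg Y (f (mact X x r)) = mact Y (mneg Y (f x)) r"
      unfolding rhom_act[OF assms(2) x r] by (rule act_neg[OF rhom_c[OF assms(2) x] r])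
  qed
qed

lemma hom_sumk:
  assumes "rm R X" "rm R Y" "rhom R X Y f" "\<And>i. i < k \<Longrightarrow> g i \<in> mcar X"
  shows "f (sumk X k g) = sumk Y k (\<lambda>i. f (g i))"
  using assms(4)
proof (induction k)
  case 0 then show ?case using hom_zero[OF assms(1-3)] by simp
next
  case (Suc k)
  have c: "sumk X k g \<in> mcar X" using rm.sumk_c[OF assms(1)] Suc.prems by simp
  have "f (sumk X (Suc k) g) = madd Y (f (sumk X k g)) (f (g k))"
    using rhom_add[OF assms(3) c Suc.prems[of k]] by simp
  then show ?case using Suc by simp
qed

lemma dsum_rm:
  assumes "rm R M" shows "rm R (dsum M n)"
proof -
  interpret rm R M by fact
  have ring: "ring R" using md unfolding right_module_def by blast
  have c: "f \<in> mcar (dsum M n) \<longleftrightarrow> (\<forall>i<n. f i \<in> mcar M) \<and> (\<forall>i\<ge>n. f i = mzero M)" for f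
    by (simp add: dsum_def)
  have ad: "madd (dsum M n) f g = (\<lambda>i. if i < n then madd M (f i) (g i) else mzero M)" for f g
    by (simp add: dsum_def)
  have ac: "mact (dsum M n) f r = (\<lambda>i. if i < n then mact M (f i) r else mzero M)" for f r
    by (simp add: dsum_def)
  have zz: "mzero (dsum M n) = (\<lambda>i. mzero M)" by (simp add: dsum_def)
  show ?thesis unfolding rm_def right_module_def
  proof (intro conjI ballI)
    show "ring R" by (rule ring)
    show "mzero (dsum M n) \<in> mcar (dsum M n)" unfolding c zz by simp
  next
    fix x y assume "x \<in> mcar (dsum M n)" "y \<in> mcar (dsum M n)"
    then show "madd (dsum M n) x y \<in> mcar (dsum M n)" unfolding c ad by simp
  next
    fix x y z assume "x \<in> mcar (dsum M n)" "y \<in> mcar (dsum M n)" "z \<in> mcar (dsum M n)"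
    then show "madd (dsum M n) (madd (dsum M n) x y) z = madd (dsum M n) x (madd (dsum M n) y z)"
      unfolding c ad by (simp add: fun_eq_iff assoc)
  next
    fix x y assume "x \<in> mcar (dsum M n)" "y \<in> mcar (dsum M n)"
    then show "madd (dsum M n) x y = madd (dsum M n) y x"
      unfolding c ad fun_eq_iff using comm by simp
  next
    fix x assume "x \<in> mcar (dsum M n)"
    then show "madd (dsum M n) (mzero (dsum M n)) x = x" unfolding c ad zz by (simp add: fun_eq_iff)
  next
    fix x assume x: "x \<in> mcar (dsum M n)"
    show "\<exists>y\<in>mcar (dsum M n). madd (dsum M n) x y = mzero (dsum M n)"
      by (rule bexI[where x="\<lambda>i. if i < n then mneg M (x i) else mzero M"])
        (use x in \<open>simp_all add: c ad zz fun_eq_iff\<close>)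
  next
    fix x r assume "x \<in> mcar (dsum M n)" "r \<in> carrier R"
    then show "mact (dsum M n) x r \<in> mcar (dsum M n)" unfolding c ac by simp
  next
    fix x y r assume "x \<in> mcar (dsum M n)" "y \<in> mcar (dsum M n)" "r \<in> carrier R"
    then show "mact (dsum M n) (madd (dsum M n) x y) r = madd (dsum M n) (mact (dsum M n) x r) (mact (dsum M n) y r)"
      unfolding c ad ac by (simp add: fun_eq_iff act_add)
  next
    fix x r s assume "x \<in> mcar (dsum M n)" "r \<in> carrier R" "s \<in> carrier R"
    then show "mact (dsum M n) x (r \<oplus>\<^bsub>R\<^esub> s) = madd (dsum M n) (mact (dsum M n) x r) (mact (dsum M n) x s)"
      unfolding c ad ac by (simp add: fun_eq_iff act_radd)
  next
    fix x r s assume "x \<in> mcar (dsum M n)" "r \<in> carrier R" "s \<in> carrier R"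
    then show "mact (dsum M n) x (r \<otimes>\<^bsub>R\<^esub> s) = mact (dsum M n) (mact (dsum M n) x r) s"
      unfolding c ac by (simp add: fun_eq_iff act_mult)
  next
    fix x assume "x \<in> mcar (dsum M n)"
    then show "mact (dsum M n) x \<one>\<^bsub>R\<^esub> = x" unfolding c ac by (simp add: fun_eq_iff act_one)
  qed
qed

lemma rhom_submod: "N \<subseteq> mcar M \<Longrightarrow> rhom R X (submod M N) f \<longleftrightarrow> rhom R X M f \<and> (\<forall>x\<in>mcar X. f x \<in> N)"
  unfolding rhom_def submod_def by auto

lemma repi_submod: "N \<subseteq> mcar M \<Longrightarrow> repi R X (submod M N) f \<longleftrightarrow> rhom R X M f \<and> f ` mcar X = N"
  unfolding repi_def using rhom_submod[of N M R X f] by (auto simp: submod_def)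

definition minj :: "('m, 'r, 'b) rmod_scheme \<Rightarrow> nat \<Rightarrow> 'm \<Rightarrow> nat \<Rightarrow> 'm" where
  "minj M i m = (\<lambda>j. if j = i then m else mzero M)"

lemma minj_hom: assumes "rm R M" "i < k" shows "rhom R M (dsum M k) (minj M i)"
proof -
  interpret rm R M by fact
  show ?thesis using assms(2) unfolding rhom_def minj_def dsum_def by (auto simp: fun_eq_iff)
qed

lemma sum_inj: assumes "rm R M" "x \<in> mcar (dsum M k)"
  shows "sumk (dsum M k) k (\<lambda>i. minj M i (x i)) = x"
proof
  interpret rm R M by fact
  fix j
  have e1: "sumk M k (\<lambda>i. minj M i (x i) j) = sumk M k (\<lambda>i. if j = i then x j else mzero M)"
    by (rule sumk_cong) (simp add: minj_def)
  have e2: "sumk (dsum M k) k (\<lambda>i. minj M i (x i)) j = (if j < k then sumk M k (\<lambda>i. minj M i (x i) j) else mzero M)"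
    by (rule sumk_dsum)
  show "sumk (dsum M k) k (\<lambda>i. minj M i (x i)) j = x j"
  proof (cases "j < k")
    case True
    then have xj: "x j \<in> mcar M" using assms(2) by (simp add: dsum_def)
    show ?thesis unfolding e2 e1 using True sumk_single[OF xj, of k j] by simp
  next
    case False
    then have "x j = mzero M" using assms(2) by (simp add: dsum_def)
    then show ?thesis unfolding e2 using False by simp
  qed
qed

lemma lift:
  assumes rm: "rm R M" and ip: "intrinsically_projective R M" and sN: "submodule R M N"
    and n: "n > 0" and a: "repi R (dsum M n) (submod M N) \<alpha>" and h: "rhom R (dsum M k) M h"
    and hN: "\<forall>x\<in>mcar (dsum M k). h x \<in> N"
  shows "\<exists>\<gamma>. rhom R (dsum M k) (dsum M n) \<gamma> \<and> (\<forall>x\<in>mcar (dsum M k). \<alpha> (\<gamma> x) = h x)"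
proof -
  have NM: "N \<subseteq> mcar M" using sN unfolding submodule_def by blast
  have aM: "rhom R (dsum M n) M \<alpha>" using a repi_submod[OF NM] by blast
  have "\<forall>i. \<exists>g. i < k \<longrightarrow> rhom R M (dsum M n) g \<and> (\<forall>x\<in>mcar M. \<alpha> (g x) = h (minj M i x))"
  proof
    fix i show "\<exists>g. i < k \<longrightarrow> rhom R M (dsum M n) g \<and> (\<forall>x\<in>mcar M. \<alpha> (g x) = h (minj M i x))"
    proof (cases "i < k")
      case True
      have mi: "rhom R M (dsum M k) (minj M i)" using minj_hom[OF rm True] .
      have "rhom R M (submod M N) (\<lambda>x. h (minj M i x))"
        unfolding rhom_submod[OF NM] using hom_comp[OF mi h] hN rhom_c[OF mi] by blast
      then have "\<exists>\<gamma>. rhom R M (dsum M n) \<gamma> \<and> (\<forall>x\<in>mcar M. \<alpha> (\<gamma> x) = h (minj M i x))"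
        using ip[unfolded intrinsically_projective_def, rule_format, OF n sN a] by blast
      then show ?thesis by blast
    qed auto
  qed
  then obtain G where G0: "\<forall>i. i < k \<longrightarrow> rhom R M (dsum M n) (G i) \<and> (\<forall>x\<in>mcar M. \<alpha> (G i x) = h (minj M i x))"
    by (rule choice[THEN exE])
  then have G: "\<And>i. i < k \<Longrightarrow> rhom R M (dsum M n) (G i) \<and> (\<forall>x\<in>mcar M. \<alpha> (G i x) = h (minj M i x))"
    by blast
  define \<gamma> where "\<gamma> x = sumk (dsum M n) k (\<lambda>i. G i (x i))" for x
  interpret D: rm R "dsum M n" using dsum_rm[OF rm] .
  have xi: "x \<in> mcar (dsum M k) \<Longrightarrow> i < k \<Longrightarrow> x i \<in> mcar M" for x i by (simp add: dsum_def)
  have Gc: "x \<in> mcar (dsum M k) \<Longrightarrow> i < k \<Longrightarrow> G i (x i) \<in> mcar (dsum M n)" for x i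
    using rhom_c[OF conjunct1[OF G] xi] by blast
  have "rhom R (dsum M k) (dsum M n) \<gamma>"
    unfolding rhom_def
  proof (intro conjI ballI)
    fix x assume x: "x \<in> mcar (dsum M k)"
    show "\<gamma> x \<in> mcar (dsum M n)" unfolding \<gamma>_def using Gc x by simp
  next
    fix x y assume x: "x \<in> mcar (dsum M k)" and y: "y \<in> mcar (dsum M k)"
    have "\<gamma> (madd (dsum M k) x y) = sumk (dsum M n) k (\<lambda>i. madd (dsum M n) (G i (x i)) (G i (y i)))"
      unfolding \<gamma>_def
    proof (rule sumk_cong)
      fix i assume i: "i < k"
      have "madd (dsum M k) x y i = madd M (x i) (y i)" using i by (simp add: dsum_def)
      then show "G i (madd (dsum M k) x y i) = madd (dsum M n) (G i (x i)) (G i (y i))"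
        using rhom_add[OF conjunct1[OF G[OF i]] xi[OF x i] xi[OF y i]] by simp
    qed
    also have "\<dots> = madd (dsum M n) (\<gamma> x) (\<gamma> y)" unfolding \<gamma>_def
      by (rule D.sumk_add) (use Gc x y in auto)
    finally show "\<gamma> (madd (dsum M k) x y) = madd (dsum M n) (\<gamma> x) (\<gamma> y)" .
  next
    fix x r assume x: "x \<in> mcar (dsum M k)" and r: "r \<in> carrier R"
    have "\<gamma> (mact (dsum M k) x r) = sumk (dsum M n) k (\<lambda>i. mact (dsum M n) (G i (x i)) r)"
      unfolding \<gamma>_def
    proof (rule sumk_cong)
      fix i assume i: "i < k"
      have "mact (dsum M k) x r i = mact M (x i) r" using i by (simp add: dsum_def)
      then show "G i (mact (dsum M k) x r i) = mact (dsum M n) (G i (x i)) r"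
        using rhom_act[OF conjunct1[OF G[OF i]] xi[OF x i] r] by simp
    qed
    also have "\<dots> = mact (dsum M n) (\<gamma> x) r" unfolding \<gamma>_def
      by (rule D.sumk_act) (use Gc x r in auto)
    finally show "\<gamma> (mact (dsum M k) x r) = mact (dsum M n) (\<gamma> x) r" .
  qed
  moreover have "\<alpha> (\<gamma> x) = h x" if x: "x \<in> mcar (dsum M k)" for x
  proof -
    have "\<alpha> (\<gamma> x) = sumk M k (\<lambda>i. \<alpha> (G i (x i)))"
      unfolding \<gamma>_def by (rule hom_sumk[OF dsum_rm[OF rm] rm aM]) (use Gc x in auto)
    also have "\<dots> = sumk M k (\<lambda>i. h (minj M i (x i)))"
      by (rule sumk_cong) (use G xi x in auto)
    also have "\<dots> = h (sumk (dsum M k) k (\<lambda>i. minj M i (x i)))"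
      by (rule hom_sumk[OF dsum_rm[OF rm] rm h, symmetric])
        (use rhom_c[OF minj_hom[OF rm]] xi x in auto)
    also have "\<dots> = h x" using sum_inj[OF rm x] by simp
    finally show ?thesis .
  qed
  ultimately show ?thesis by blast
qed


definition tk :: "('m, 'r, 'b) rmod_scheme \<Rightarrow> nat \<Rightarrow> (nat \<Rightarrow> 'm) \<Rightarrow> nat \<Rightarrow> 'm" where
  "tk M a x = (\<lambda>i. if i < a then x i else mzero M)"
definition dr :: "nat \<Rightarrow> (nat \<Rightarrow> 'm) \<Rightarrow> nat \<Rightarrow> 'm" where
  "dr a x = (\<lambda>i. x (a + i))"
definition jn :: "nat \<Rightarrow> (nat \<Rightarrow> 'm) \<Rightarrow> (nat \<Rightarrow> 'm) \<Rightarrow> nat \<Rightarrow> 'm" where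
  "jn a u v = (\<lambda>i. if i < a then u i else v (i - a))"

lemma tk_hom: "rhom R (dsum M (a + b)) (dsum M a) (tk M a)"
  unfolding rhom_def tk_def dsum_def by (auto simp: fun_eq_iff)

lemma dr_hom: "rhom R (dsum M (a + b)) (dsum M b) (dr a)"
  unfolding rhom_def dr_def dsum_def by (auto simp: fun_eq_iff)

lemma jn_c: "u \<in> mcar (dsum M a) \<Longrightarrow> v \<in> mcar (dsum M b) \<Longrightarrow> jn a u v \<in> mcar (dsum M (a + b))"
  unfolding jn_def dsum_def by auto

lemma jn_hom:
  assumes "rhom R X (dsum M a) f" "rhom R X (dsum M b) g"
  shows "rhom R X (dsum M (a + b)) (\<lambda>x. jn a (f x) (g x))"
  unfolding rhom_def
proof (intro conjI ballI)
  fix x assume "x \<in> mcar X" then show "jn a (f x) (g x) \<in> mcar (dsum M (a + b))"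
    using jn_c rhom_c assms by metis
next
  fix x y assume x: "x \<in> mcar X" and y: "y \<in> mcar X"
  have fx: "f x \<in> mcar (dsum M a)" "f y \<in> mcar (dsum M a)" "g x \<in> mcar (dsum M b)" "g y \<in> mcar (dsum M b)"
    using rhom_c assms x y by metis+
  show "jn a (f (madd X x y)) (g (madd X x y)) = madd (dsum M (a + b)) (jn a (f x) (g x)) (jn a (f y) (g y))"
    using rhom_add[OF assms(1) x y] rhom_add[OF assms(2) x y] fx
    by (auto simp: jn_def dsum_def fun_eq_iff)
next
  fix x r assume x: "x \<in> mcar X" and r: "r \<in> carrier R"
  have fx: "f x \<in> mcar (dsum M a)" "g x \<in> mcar (dsum M b)"
    using rhom_c assms x by metis+
  show "jn a (f (mact X x r)) (g (mact X x r)) = mact (dsum M (a + b)) (jn a (f x) (g x)) r"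
    using rhom_act[OF assms(1) x r] rhom_act[OF assms(2) x r] fx
    by (auto simp: jn_def dsum_def fun_eq_iff)
qed

lemma tk_jn[simp]: "u \<in> mcar (dsum M a) \<Longrightarrow> tk M a (jn a u v) = u"
  unfolding tk_def jn_def dsum_def by (auto simp: fun_eq_iff)
lemma dr_jn[simp]: "dr a (jn a u v) = v"
  unfolding dr_def jn_def by (auto simp: fun_eq_iff)
lemma jn_tk_dr: "x \<in> mcar (dsum M (a + b)) \<Longrightarrow> jn a (tk M a x) (dr a x) = x"
  unfolding tk_def jn_def dr_def by (auto simp: fun_eq_iff)
lemma tk_c: "x \<in> mcar (dsum M (a + b)) \<Longrightarrow> tk M a x \<in> mcar (dsum M a)"
  using rhom_c[OF tk_hom] by metis
lemma dr_c: "x \<in> mcar (dsum M (a + b)) \<Longrightarrow> dr a x \<in> mcar (dsum M b)"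
  using rhom_c[OF dr_hom] by metis

lemma sub_neg: assumes "rm R M" "submodule R M N" "x \<in> N" shows "mneg M x \<in> N"
proof -
  interpret rm R M by fact
  obtain y where "y \<in> N" "madd M x y = mzero M" using assms(2,3) unfolding submodule_def by blast
  moreover have "N \<subseteq> mcar M" using assms(2) unfolding submodule_def by blast
  ultimately show ?thesis using neg_unique assms(3) by (metis subsetD)
qed

lemma msum_sub:
  assumes "rm R M" "submodule R M A" "submodule R M B"
  shows "submodule R M (msum M A B)"
proof -
  interpret rm R M by fact
  have AM: "A \<subseteq> mcar M" and BM: "B \<subseteq> mcar M" using assms unfolding submodule_def by blast+
  have A: "mzero M \<in> A" "\<And>x y. x \<in> A \<Longrightarrow> y \<in> A \<Longrightarrow> madd M x y \<in> A"
    "\<And>x r. x \<in> A \<Longrightarrow> r \<in> carrier R \<Longrightarrow> mact M x r \<in> A"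
    using assms(2) unfolding submodule_def by blast+
  have B: "mzero M \<in> B" "\<And>x y. x \<in> B \<Longrightarrow> y \<in> B \<Longrightarrow> madd M x y \<in> B"
    "\<And>x r. x \<in> B \<Longrightarrow> r \<in> carrier R \<Longrightarrow> mact M x r \<in> B"
    using assms(3) unfolding submodule_def by blast+
  show ?thesis unfolding submodule_def msum_def
  proof (intro conjI ballI)
    show "{madd M a b |a b. a \<in> A \<and> b \<in> B} \<subseteq> mcar M" using AM BM add_c by blast
    show "mzero M \<in> {madd M a b |a b. a \<in> A \<and> b \<in> B}" using A B by force
  next
    fix x y assume "x \<in> {madd M a b |a b. a \<in> A \<and> b \<in> B}" "y \<in> {madd M a b |a b. a \<in> A \<and> b \<in> B}"
    then obtain a1 b1 a2 b2 where "x = madd M a1 b1" "y = madd M a2 b2" "a1 \<in> A" "a2 \<in> A" "b1 \<in> B" "b2 \<in> B"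
      by blast
    then have "madd M x y = madd M (madd M a1 a2) (madd M b1 b2)"
      using swap4[of a1 b1 a2 b2] AM BM by auto
    moreover have "madd M a1 a2 \<in> A" "madd M b1 b2 \<in> B" using A(2) B(2) \<open>a1 \<in> A\<close> \<open>a2 \<in> A\<close> \<open>b1 \<in> B\<close> \<open>b2 \<in> B\<close> by auto
    ultimately show "madd M x y \<in> {madd M a b |a b. a \<in> A \<and> b \<in> B}" by blast
  next
    fix x assume "x \<in> {madd M a b |a b. a \<in> A \<and> b \<in> B}"
    then obtain a1 b1 where ab: "x = madd M a1 b1" "a1 \<in> A" "b1 \<in> B" by blast
    have "madd M x (madd M (mneg M a1) (mneg M b1)) = mzero M"
      using ab AM BM swap4[of a1 b1 "mneg M a1" "mneg M b1"] by auto
    moreover have "madd M (mneg M a1) (mneg M b1) \<in> {madd M a b |a b. a \<in> A \<and> b \<in> B}"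
      using ab sub_neg[OF assms(1,2)] sub_neg[OF assms(1,3)] by blast
    ultimately show "\<exists>y\<in>{madd M a b |a b. a \<in> A \<and> b \<in> B}. madd M x y = mzero M" by blast
  next
    fix x r assume "x \<in> {madd M a b |a b. a \<in> A \<and> b \<in> B}" "r \<in> carrier R"
    then obtain a1 b1 where ab: "x = madd M a1 b1" "a1 \<in> A" "b1 \<in> B" by blast
    have "mact M x r = madd M (mact M a1 r) (mact M b1 r)"
      using act_add[of a1 b1 r] ab AM BM \<open>r \<in> carrier R\<close> by auto
    moreover have "mact M a1 r \<in> A" "mact M b1 r \<in> B" using ab A(3) B(3) \<open>r \<in> carrier R\<close> by auto
    ultimately show "mact M x r \<in> {madd M a b |a b. a \<in> A \<and> b \<in> B}" by blast
  qed
qed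

theorem mainTheorem11:
  fixes R :: "('r, 'a) ring_scheme" and M :: "('m, 'r) rmod" and A B :: "'m set"
  assumes "right_module R M"
    and "intrinsically_projective R M"
    and "submodule R M A" and "submodule R M B"
    and "fin_M_presented R M (submod M A)"
    and "fin_M_presented R M (submod M B)"
  shows "fin_M_presented R M (submod M (msum M A B)) \<longleftrightarrow>
         fin_M_generated R M (submod M (A \<inter> B))"
proof -
  have rm: "rm R M" using assms(1) by (simp add: rm_def)
  interpret rm R M by (fact rm)
  have DM: "\<And>k. rm R (dsum M k)" using dsum_rm[OF rm] .
  have AM: "A \<subseteq> mcar M" and BM: "B \<subseteq> mcar M" using assms(3,4) unfolding submodule_def by blast+
  have ABM: "A \<inter> B \<subseteq> mcar M" using AM by blast
  have z: "\<And>N. mzero (submod M N) = mzero M" "\<And>N. mcar (submod M N) = N" by (simp_all add: submod_def)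
  obtain a la \<alpha>A \<beta>A where a: "a > 0" "la > 0" and bA: "rhom R (dsum M la) (dsum M a) \<beta>A"
    and aA: "rhom R (dsum M a) M \<alpha>A" "\<alpha>A ` mcar (dsum M a) = A"
    and kA: "\<beta>A ` mcar (dsum M la) = {x \<in> mcar (dsum M a). \<alpha>A x = mzero M}"
    using assms(5) unfolding fin_M_presented_def z repi_submod[OF AM] by blast
  obtain b lb \<alpha>B \<beta>B where b: "b > 0" "lb > 0" and bB: "rhom R (dsum M lb) (dsum M b) \<beta>B"
    and aB: "rhom R (dsum M b) M \<alpha>B" "\<alpha>B ` mcar (dsum M b) = B"
    and kB: "\<beta>B ` mcar (dsum M lb) = {x \<in> mcar (dsum M b). \<alpha>B x = mzero M}"
    using assms(6) unfolding fin_M_presented_def z repi_submod[OF BM] by blast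
  have Ain: "\<And>x. x \<in> mcar (dsum M a) \<Longrightarrow> \<alpha>A x \<in> A" using aA(2) by blast
  have Bin: "\<And>x. x \<in> mcar (dsum M b) \<Longrightarrow> \<alpha>B x \<in> B" using aB(2) by blast
  define S where "S = msum M A B"
  have sS: "submodule R M S" using msum_sub[OF rm assms(3,4)] S_def by simp
  have SM: "S \<subseteq> mcar M" using sS unfolding submodule_def by blast
  define \<pi> where "\<pi> = (\<lambda>x. madd M (\<alpha>A (tk M a x)) (\<alpha>B (dr a x)))"
  have \<pi>h: "rhom R (dsum M (a+b)) M \<pi>"
    unfolding \<pi>_def by (rule hom_add[OF rm hom_comp[OF tk_hom aA(1)] hom_comp[OF dr_hom aB(1)]])
  have \<pi>jn: "\<pi> (jn a x1 y1) = madd M (\<alpha>A x1) (\<alpha>B y1)" if "x1 \<in> mcar (dsum M a)" for x1 y1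
    unfolding \<pi>_def using that by simp
  have \<pi>S: "\<pi> ` mcar (dsum M (a+b)) = S"
  proof
    show "\<pi> ` mcar (dsum M (a+b)) \<subseteq> S"
    proof
      fix y assume "y \<in> \<pi> ` mcar (dsum M (a+b))"
      then obtain x where x: "x \<in> mcar (dsum M (a+b))" "y = \<pi> x" by blast
      have "\<alpha>A (tk M a x) \<in> A" "\<alpha>B (dr a x) \<in> B" using Ain Bin tk_c[OF x(1)] dr_c[OF x(1)] by auto
      then show "y \<in> S" unfolding x(2) \<pi>_def S_def msum_def by blast
    qed
    show "S \<subseteq> \<pi> ` mcar (dsum M (a+b))"
    proof
      fix s assume "s \<in> S"
      then obtain p q where pq: "s = madd M p q" "p \<in> A" "q \<in> B" unfolding S_def msum_def by blast
      then obtain x1 y1 where x1: "x1 \<in> mcar (dsum M a)" "\<alpha>A x1 = p"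
        and y1: "y1 \<in> mcar (dsum M b)" "\<alpha>B y1 = q" using aA(2) aB(2) by blast
      then have "jn a x1 y1 \<in> mcar (dsum M (a+b))" "\<pi> (jn a x1 y1) = s"
        using jn_c[OF x1(1) y1(1)] \<pi>jn[OF x1(1)] pq x1(2) y1(2) by auto
      then show "s \<in> \<pi> ` mcar (dsum M (a+b))" by blast
    qed
  qed
  have \<pi>repi: "repi R (dsum M (a+b)) (submod M S) \<pi>" using \<pi>h \<pi>S repi_submod[OF SM] by blast
  show ?thesis unfolding S_def[symmetric]
  proof
    assume "fin_M_presented R M (submod M S)"
    then obtain n l \<alpha> \<beta> where nl: "n > 0" "l > 0" and \<beta>: "rhom R (dsum M l) (dsum M n) \<beta>"
      and \<alpha>: "rhom R (dsum M n) M \<alpha>" "\<alpha> ` mcar (dsum M n) = S"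
      and kS: "\<beta> ` mcar (dsum M l) = {x \<in> mcar (dsum M n). \<alpha> x = mzero M}"
      unfolding fin_M_presented_def z repi_submod[OF SM] by blast
    have \<alpha>repi: "repi R (dsum M n) (submod M S) \<alpha>" using \<alpha> repi_submod[OF SM] by blast
    obtain \<phi> where \<phi>: "rhom R (dsum M (a+b)) (dsum M n) \<phi>" "\<forall>x\<in>mcar (dsum M (a+b)). \<alpha> (\<phi> x) = \<pi> x"
      using lift[OF rm assms(2) sS nl(1) \<alpha>repi \<pi>h] \<pi>S by blast
    have ab0: "a + b > 0" using a by simp
    obtain \<psi> where \<psi>: "rhom R (dsum M n) (dsum M (a+b)) \<psi>" "\<forall>x\<in>mcar (dsum M n). \<pi> (\<psi> x) = \<alpha> x"
      using lift[OF rm assms(2) sS ab0 \<pi>repi \<alpha>(1)] \<alpha>(2) by blast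
    define D where "D = dsum M (a+b)"
    interpret D: rm R D unfolding D_def by (rule DM)
    define \<theta> where "\<theta> = (\<lambda>z. madd D (madd D (tk M (a+b) z) (mneg D (\<psi> (\<phi> (tk M (a+b) z))))) (\<psi> (\<beta> (dr (a+b) z))))"
    have h1: "rhom R (dsum M (a+b+l)) D (\<lambda>z. \<psi> (\<phi> (tk M (a+b) z)))"
      unfolding D_def by (rule hom_comp[OF tk_hom hom_comp[OF \<phi>(1) \<psi>(1)]])
    have h2: "rhom R (dsum M (a+b+l)) D (\<lambda>z. madd D (tk M (a+b) z) (mneg D (\<psi> (\<phi> (tk M (a+b) z)))))"
      by (rule hom_add[OF D.rm_axioms _ hom_negf[OF D.rm_axioms h1]]) (simp add: D_def tk_hom)
    have h3: "rhom R (dsum M (a+b+l)) D (\<lambda>z. \<psi> (\<beta> (dr (a+b) z)))"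
      unfolding D_def by (rule hom_comp[OF dr_hom hom_comp[OF \<beta> \<psi>(1)]])
    have \<theta>h: "rhom R (dsum M (a+b+l)) D \<theta>"
      unfolding \<theta>_def by (rule hom_add[OF D.rm_axioms h2 h3])
    define \<delta> where "\<delta> = (\<lambda>z. \<alpha>A (tk M a (\<theta> z)))"
    have \<delta>h: "rhom R (dsum M (a+b+l)) M \<delta>"
      unfolding \<delta>_def by (rule hom_comp[OF \<theta>h[unfolded D_def] hom_comp[OF tk_hom aA(1)]])
    have \<pi>0: "\<pi> (\<theta> z) = mzero M" if zz: "z \<in> mcar (dsum M (a+b+l))" for z
    proof -
      define x where "x = tk M (a+b) z"
      define u where "u = dr (a+b) z"
      have x: "x \<in> mcar D" unfolding x_def D_def by (rule tk_c[OF zz])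
      have u: "u \<in> mcar (dsum M l)" unfolding u_def by (rule dr_c[OF zz])
      have p: "\<psi> (\<phi> x) \<in> mcar D" unfolding D_def using rhom_c[OF \<psi>(1) rhom_c[OF \<phi>(1) x[unfolded D_def]]] .
      have bu: "\<psi> (\<beta> u) \<in> mcar D" unfolding D_def by (rule rhom_c[OF \<psi>(1) rhom_c[OF \<beta> u]])
      have \<pi>h': "rhom R D M \<pi>" using \<pi>h D_def by simp
      have "\<pi> (\<theta> z) = madd M (madd M (\<pi> x) (\<pi> (mneg D (\<psi> (\<phi> x))))) (\<pi> (\<psi> (\<beta> u)))"
        unfolding \<theta>_def x_def[symmetric] u_def[symmetric]
        using rhom_add[OF \<pi>h'] x p bu by simp
      also have "\<pi> (mneg D (\<psi> (\<phi> x))) = mneg M (\<pi> x)"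
        using hom_neg[OF D.rm_axioms rm \<pi>h' p] \<psi>(2) \<phi> x rhom_c unfolding D_def by metis
      also have "\<pi> (\<psi> (\<beta> u)) = mzero M"
      proof -
        have "\<beta> u \<in> {x \<in> mcar (dsum M n). \<alpha> x = mzero M}" using kS u by blast
        then show ?thesis using \<psi>(2) by simp
      qed
      finally show ?thesis using rhom_c[OF \<pi>h' x] by simp
    qed
    have \<delta>AB: "\<delta> z \<in> A \<inter> B" if zz: "z \<in> mcar (dsum M (a+b+l))" for z
    proof -
      have t: "\<theta> z \<in> mcar (dsum M (a+b))" using rhom_c[OF \<theta>h zz] D_def by simp
      define p where "p = \<alpha>A (tk M a (\<theta> z))"
      define q where "q = \<alpha>B (dr a (\<theta> z))"
      have pA: "p \<in> A" and qB: "q \<in> B" unfolding p_def q_def using Ain[OF tk_c[OF t]] Bin[OF dr_c[OF t]] by auto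
      have pM: "p \<in> mcar M" and qM: "q \<in> mcar M" using pA qB AM BM by auto
      have "madd M p q = mzero M" using \<pi>0[OF zz] unfolding \<pi>_def p_def q_def by simp
      then have "madd M q p = mzero M" using comm[OF pM qM] by simp
      then have "mneg M q = p" using neg_unique[OF qM pM] by blast
      then have "p \<in> B" using sub_neg[OF rm assms(4) qB] by simp
      then show ?thesis using pA unfolding \<delta>_def p_def by blast
    qed
    have \<delta>onto: "A \<inter> B \<subseteq> \<delta> ` mcar (dsum M (a+b+l))"
    proof
      fix w assume w: "w \<in> A \<inter> B"
      obtain x1 where x1: "x1 \<in> mcar (dsum M a)" "\<alpha>A x1 = w" using aA(2) w by blast
      have "mneg M w \<in> B" using sub_neg[OF rm assms(4)] w by blast
      then obtain y1 where y1: "y1 \<in> mcar (dsum M b)" "\<alpha>B y1 = mneg M w" using aB(2) by (metis imageE)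
      define x where "x = jn a x1 y1"
      have x: "x \<in> mcar (dsum M (a+b))" unfolding x_def using jn_c[OF x1(1) y1(1)] .
      have wM: "w \<in> mcar M" using w AM by blast
      have "\<pi> x = madd M w (mneg M w)" unfolding x_def using \<pi>jn[OF x1(1)] x1(2) y1(2) by simp
      then have "\<pi> x = mzero M" using wM by simp
      moreover have "\<phi> x \<in> mcar (dsum M n)" using rhom_c[OF \<phi>(1) x] .
      ultimately have "\<phi> x \<in> \<beta> ` mcar (dsum M l)" using \<phi>(2) x kS by simp
      then obtain u where u: "u \<in> mcar (dsum M l)" "\<beta> u = \<phi> x" by (metis imageE)
      define zz where "zz = jn (a+b) x u"
      have zz: "zz \<in> mcar (dsum M (a+b+l))" unfolding zz_def using jn_c[OF x u(1)] .
      have p: "\<psi> (\<phi> x) \<in> mcar D" unfolding D_def by (rule rhom_c[OF \<psi>(1) rhom_c[OF \<phi>(1) x]])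
      have xD: "x \<in> mcar D" using x D_def by simp
      have "tk M (a+b) zz = x" unfolding zz_def using tk_jn[OF x] .
      moreover have "dr (a+b) zz = u" unfolding zz_def by simp
      ultimately have "\<theta> zz = madd D (madd D x (mneg D (\<psi> (\<phi> x)))) (\<psi> (\<phi> x))"
        unfolding \<theta>_def using u(2) by simp
      then have "\<theta> zz = x" using xD p by simp
      then have "\<delta> zz = w" unfolding \<delta>_def x_def using x1 by simp
      then show "w \<in> \<delta> ` mcar (dsum M (a+b+l))" using zz by blast
    qed
    have "repi R (dsum M (a+b+l)) (submod M (A \<inter> B)) \<delta>"
      unfolding repi_submod[OF ABM] using \<delta>h \<delta>AB \<delta>onto by blast
    then show "fin_M_generated R M (submod M (A \<inter> B))"
      unfolding fin_M_generated_def using a by (intro exI[of _ "a+b+l"]) auto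
  next
    assume "fin_M_generated R M (submod M (A \<inter> B))"
    then obtain c \<delta> where c: "c > 0" and \<delta>: "rhom R (dsum M c) M \<delta>" "\<delta> ` mcar (dsum M c) = A \<inter> B"
      unfolding fin_M_generated_def repi_submod[OF ABM] by blast
    have aArepi: "repi R (dsum M a) (submod M A) \<alpha>A" using aA repi_submod[OF AM] by blast
    have aBrepi: "repi R (dsum M b) (submod M B) \<alpha>B" using aB repi_submod[OF BM] by blast
    obtain \<gamma> where \<gamma>: "rhom R (dsum M c) (dsum M a) \<gamma>" "\<forall>w\<in>mcar (dsum M c). \<alpha>A (\<gamma> w) = \<delta> w"
      using lift[OF rm assms(2) assms(3) a(1) aArepi \<delta>(1)] \<delta>(2) by blast
    obtain \<gamma>' where \<gamma>': "rhom R (dsum M c) (dsum M b) \<gamma>'" "\<forall>w\<in>mcar (dsum M c). \<alpha>B (\<gamma>' w) = \<delta> w"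
      using lift[OF rm assms(2) assms(4) b(1) aBrepi \<delta>(1)] \<delta>(2) by blast
    define Da where "Da = dsum M a"
    define Db where "Db = dsum M b"
    interpret Da: rm R Da unfolding Da_def by (rule DM)
    interpret Db: rm R Db unfolding Db_def by (rule DM)
    define \<beta>' where "\<beta>' = (\<lambda>z. jn a (madd Da (\<beta>A (tk M la (tk M (la+lb) z))) (\<gamma> (dr (la+lb) z)))
          (madd Db (\<beta>B (dr la (tk M (la+lb) z))) (mneg Db (\<gamma>' (dr (la+lb) z)))))"
    have h1: "rhom R (dsum M (la+lb+c)) (dsum M la) (\<lambda>z. tk M la (tk M (la+lb) z))"
      by (rule hom_comp[OF tk_hom[of R M "la+lb" c] tk_hom[of R M la lb]])
    have h2: "rhom R (dsum M (la+lb+c)) (dsum M lb) (\<lambda>z. dr la (tk M (la+lb) z))"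
      by (rule hom_comp[OF tk_hom[of R M "la+lb" c] dr_hom[of R M la lb]])
    have h3: "rhom R (dsum M (la+lb+c)) (dsum M c) (dr (la+lb))"
      by (rule dr_hom)
    have g1: "rhom R (dsum M (la+lb+c)) Da (\<lambda>z. madd Da (\<beta>A (tk M la (tk M (la+lb) z))) (\<gamma> (dr (la+lb) z)))"
      unfolding Da_def by (rule hom_add[OF DM hom_comp[OF h1 bA] hom_comp[OF h3 \<gamma>(1)]])
    have g2: "rhom R (dsum M (la+lb+c)) Db (\<lambda>z. madd Db (\<beta>B (dr la (tk M (la+lb) z))) (mneg Db (\<gamma>' (dr (la+lb) z))))"
      unfolding Db_def by (rule hom_add[OF DM hom_comp[OF h2 bB] hom_negf[OF DM hom_comp[OF h3 \<gamma>'(1)]]])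
    have \<beta>'h: "rhom R (dsum M (la+lb+c)) (dsum M (a+b)) \<beta>'"
    proof -
      have g1': "rhom R (dsum M (la+lb+c)) (dsum M a) (\<lambda>z. madd Da (\<beta>A (tk M la (tk M (la+lb) z))) (\<gamma> (dr (la+lb) z)))"
        unfolding Da_def[symmetric] by (rule g1)
      have g2': "rhom R (dsum M (la+lb+c)) (dsum M b) (\<lambda>z. madd Db (\<beta>B (dr la (tk M (la+lb) z))) (mneg Db (\<gamma>' (dr (la+lb) z))))"
        unfolding Db_def[symmetric] by (rule g2)
      show ?thesis unfolding \<beta>'_def by (rule jn_hom[OF g1' g2'])
    qed
    have ker: "\<beta>' ` mcar (dsum M (la+lb+c)) = {x \<in> mcar (dsum M (a+b)). \<pi> x = mzero M}"
    proof
      show "\<beta>' ` mcar (dsum M (la+lb+c)) \<subseteq> {x \<in> mcar (dsum M (a+b)). \<pi> x = mzero M}"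
      proof
        fix y assume "y \<in> \<beta>' ` mcar (dsum M (la+lb+c))"
        then obtain z where zz: "z \<in> mcar (dsum M (la+lb+c))" and y: "y = \<beta>' z" by blast
        define u where "u = tk M la (tk M (la+lb) z)"
        define v where "v = dr la (tk M (la+lb) z)"
        define w where "w = dr (la+lb) z"
        have u: "u \<in> mcar (dsum M la)" using rhom_c[OF h1 zz] u_def by simp
        have v: "v \<in> mcar (dsum M lb)" using rhom_c[OF h2 zz] v_def by simp
        have w: "w \<in> mcar (dsum M c)" using rhom_c[OF h3 zz] w_def by simp
        have bu0: "\<beta>A u \<in> {x \<in> mcar (dsum M a). \<alpha>A x = mzero M}" using kA u by blast
        have bv0: "\<beta>B v \<in> {x \<in> mcar (dsum M b). \<alpha>B x = mzero M}" using kB v by blast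
        have bu: "\<beta>A u \<in> mcar Da" "\<alpha>A (\<beta>A u) = mzero M" using bu0 unfolding Da_def by simp_all
        have bv: "\<beta>B v \<in> mcar Db" "\<alpha>B (\<beta>B v) = mzero M" using bv0 unfolding Db_def by simp_all
        have gw: "\<gamma> w \<in> mcar Da" "\<gamma>' w \<in> mcar Db" using rhom_c[OF \<gamma>(1) w(1)] rhom_c[OF \<gamma>'(1) w(1)] Da_def Db_def by simp_all
        have dw: "\<delta> w \<in> mcar M" using rhom_c[OF \<delta>(1) w] .
        have aAh: "rhom R Da M \<alpha>A" using aA Da_def by simp
        have aBh: "rhom R Db M \<alpha>B" using aB Db_def by simp
        have e1: "\<alpha>A (madd Da (\<beta>A u) (\<gamma> w)) = \<delta> w"
          using rhom_add[OF aAh bu(1) gw(1)] bu(2) \<gamma>(2) w dw by simp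
        have e2: "\<alpha>B (madd Db (\<beta>B v) (mneg Db (\<gamma>' w))) = mneg M (\<delta> w)"
          using rhom_add[OF aBh bv(1) Db.neg_c[OF gw(2)]] bv(2) hom_neg[OF Db.rm_axioms rm aBh gw(2)] \<gamma>'(2) w dw by simp
        have yeq: "y = jn a (madd Da (\<beta>A u) (\<gamma> w)) (madd Db (\<beta>B v) (mneg Db (\<gamma>' w)))"
          unfolding y \<beta>'_def u_def v_def w_def ..
        have "madd Da (\<beta>A u) (\<gamma> w) \<in> mcar Da" using bu gw by simp
        then have "madd Da (\<beta>A u) (\<gamma> w) \<in> mcar (dsum M a)" unfolding Da_def .
        then have "\<pi> y = madd M (\<delta> w) (mneg M (\<delta> w))" unfolding yeq using \<pi>jn e1 e2 by simp
        then have "\<pi> y = mzero M" using dw by simp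
        moreover have "y \<in> mcar (dsum M (a+b))" using rhom_c[OF \<beta>'h zz] y by simp
        ultimately show "y \<in> {x \<in> mcar (dsum M (a+b)). \<pi> x = mzero M}" by blast
      qed
      show "{x \<in> mcar (dsum M (a+b)). \<pi> x = mzero M} \<subseteq> \<beta>' ` mcar (dsum M (la+lb+c))"
      proof
        fix x assume "x \<in> {x \<in> mcar (dsum M (a+b)). \<pi> x = mzero M}"
        then have x: "x \<in> mcar (dsum M (a+b))" and px: "\<pi> x = mzero M" by auto
        define x1 where "x1 = tk M a x"
        define y1 where "y1 = dr a x"
        have x1: "x1 \<in> mcar Da" using tk_c[OF x] x1_def Da_def by simp
        have y1: "y1 \<in> mcar Db" using dr_c[OF x] y1_def Db_def by simp
        have PA: "\<alpha>A x1 \<in> A" using Ain x1 Da_def by simp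
        have QB: "\<alpha>B y1 \<in> B" using Bin y1 Db_def by simp
        have PQ: "madd M (\<alpha>A x1) (\<alpha>B y1) = mzero M" using px unfolding \<pi>_def x1_def y1_def .
        have PM: "\<alpha>A x1 \<in> mcar M" using PA AM by blast
        have QM: "\<alpha>B y1 \<in> mcar M" using QB BM by blast
        have "madd M (\<alpha>B y1) (\<alpha>A x1) = mzero M" using PQ comm[OF PM QM] by simp
        then have "mneg M (\<alpha>B y1) = \<alpha>A x1" using neg_unique[OF QM PM] by blast
        then have "\<alpha>A x1 \<in> B" using sub_neg[OF rm assms(4) QB] by simp
        then have "\<alpha>A x1 \<in> \<delta> ` mcar (dsum M c)" using PA \<delta>(2) by simp
        then obtain w where w: "w \<in> mcar (dsum M c)" "\<delta> w = \<alpha>A x1" by (metis imageE)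
        have gw: "\<gamma> w \<in> mcar Da" "\<gamma>' w \<in> mcar Db" using rhom_c[OF \<gamma>(1) w(1)] rhom_c[OF \<gamma>'(1) w(1)] Da_def Db_def by simp_all
        have aAh: "rhom R Da M \<alpha>A" using aA Da_def by simp
        have aBh: "rhom R Db M \<alpha>B" using aB Db_def by simp
        define x1' where "x1' = madd Da x1 (mneg Da (\<gamma> w))"
        define y1' where "y1' = madd Db y1 (\<gamma>' w)"
        have x1'c: "x1' \<in> mcar Da" using x1 gw x1'_def by simp
        have y1'c: "y1' \<in> mcar Db" using y1 gw y1'_def by simp
        have "\<alpha>A x1' = madd M (\<alpha>A x1) (mneg M (\<alpha>A x1))"
          unfolding x1'_def using rhom_add[OF aAh x1 Da.neg_c[OF gw(1)]] hom_neg[OF Da.rm_axioms rm aAh gw(1)]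
            \<gamma>(2) w by simp
        then have "\<alpha>A x1' = mzero M" using PM by simp
        then have "x1' \<in> \<beta>A ` mcar (dsum M la)" using kA x1'c Da_def by simp
        then obtain u where u: "u \<in> mcar (dsum M la)" "\<beta>A u = x1'" by (metis imageE)
        have "\<alpha>B y1' = madd M (\<alpha>B y1) (\<alpha>A x1)"
          unfolding y1'_def using rhom_add[OF aBh y1 gw(2)] \<gamma>'(2) w by simp
        then have "\<alpha>B y1' = mzero M" using PQ PM QM comm by simp
        then have "y1' \<in> \<beta>B ` mcar (dsum M lb)" using kB y1'c Db_def by simp
        then obtain v where v: "v \<in> mcar (dsum M lb)" "\<beta>B v = y1'" by (metis imageE)
        define z where "z = jn (la+lb) (jn la u v) w"
        have uv: "jn la u v \<in> mcar (dsum M (la+lb))" using jn_c[OF u(1) v(1)] .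
        have zc: "z \<in> mcar (dsum M (la+lb+c))" unfolding z_def using jn_c[OF uv w(1)] .
        have "\<beta>' z = jn a (madd Da x1' (\<gamma> w)) (madd Db y1' (mneg Db (\<gamma>' w)))"
          unfolding \<beta>'_def z_def using uv u v by simp
        also have "\<dots> = jn a x1 y1" unfolding x1'_def y1'_def using x1 y1 gw by simp
        also have "\<dots> = x" unfolding x1_def y1_def using jn_tk_dr[OF x] .
        finally show "x \<in> \<beta>' ` mcar (dsum M (la+lb+c))" using zc by blast
      qed
    qed
    show "fin_M_presented R M (submod M S)"
      unfolding fin_M_presented_def z
      apply (rule exI[of _ "a+b"], rule conjI, simp add: a)
      apply (rule exI[of _ "la+lb+c"], rule conjI, simp add: c)
      apply (rule exI[of _ \<pi>], rule exI[of _ \<beta>'])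
      apply (intro conjI)
        apply (rule \<beta>'h)
       apply (rule \<pi>repi)
      apply (rule ker)
      done
  qed
qed

end
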